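(* Let $G$ be an undirected graph and $n\ge 4$ an even integer. Then $G$ admits a homomorphism to the undirected cycle $C_{n-1}$ if and only if $G$ admits an acyclic orientation containing no induced subgraph isomorphic to a member of $F_n\setminus\{\overrightarrow{C}_3,\overrightarrow{C}_4\}$.
   Context: Graph homomorphisms are vertex maps sending edges to edges (for digraphs: arcs to arcs). An orientation of an undirected graph assigns exactly one direction to each edge; it is acyclic if it has no directed cycle. $\overrightarrow{C}_k$ is the directed cycle on $k$ vertices. For $n\ge 3$, $Q_n$ is the oriented path $(q_0,\dots,q_{n-1})$ on $n$ distinct vertices, with exactly one arc between $q_i$ and $q_{i+1}$ for each $i$ and no other arcs, such that: the first two arcs are $q_0\to q_1$ and $q_1\to q_2$; the subpath $(q_1,\dots,q_{n-2})$ is alternating (consecutive arcs have opposite directions); and the last two arcs have the same direction. For even $n\ge 4$, $F_n$ is the set (up to isomorphism) of oriented graphs $H$ for which there is a homomorphism $Q_n\to H$ that is surjective on vertices. *)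

theory Defs
  imports Main
begin

definition ugraph :: "'a set \<Rightarrow> ('a \<times> 'a) set \<Rightarrow> bool" where
  "ugraph V E \<longleftrightarrow> E \<subseteq> V \<times> V \<and> sym E \<and> irrefl E"

definition graph_hom ::
  "'a set \<Rightarrow> ('a \<times> 'a) set \<Rightarrow> 'b set \<Rightarrow> ('b \<times> 'b) set \<Rightarrow> ('a \<Rightarrow> 'b) \<Rightarrow> bool" where
  "graph_hom V E W F f \<longleftrightarrow> (\<forall>v\<in>V. f v \<in> W) \<and> (\<forall>(u,v)\<in>E. (f u, f v) \<in> F)"

definition cycle_edges :: "nat \<Rightarrow> (nat \<times> nat) set" where
  "cycle_edges m = {(i,j). i < m \<and> j < m \<and> (j = Suc i mod m \<or> i = Suc j mod m)}"

definition orientation :: "'a set \<Rightarrow> ('a \<times> 'a) set \<Rightarrow> ('a \<times> 'a) set \<Rightarrow> bool" where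
  "orientation V E D \<longleftrightarrow> D \<subseteq> E \<and> (\<forall>u v. (u,v) \<in> E \<longrightarrow> ((u,v) \<in> D \<longleftrightarrow> (v,u) \<notin> D))"

definition oriented_graph :: "'a set \<Rightarrow> ('a \<times> 'a) set \<Rightarrow> bool" where
  "oriented_graph S A \<longleftrightarrow> A \<subseteq> S \<times> S \<and> irrefl A \<and> (\<forall>u v. (u,v) \<in> A \<longrightarrow> (v,u) \<notin> A)"

(* A is the arc set of the oriented path Q_n on vertices q_i = i, i < n *)
definition Q_path :: "nat \<Rightarrow> (nat \<times> nat) set \<Rightarrow> bool" where
  "Q_path n A \<longleftrightarrow>
     (\<forall>i j. (i,j) \<in> A \<longrightarrow> i < n \<and> j < n \<and> (j = Suc i \<or> i = Suc j)) \<and>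
     (\<forall>i. Suc i < n \<longrightarrow> ((i, Suc i) \<in> A \<longleftrightarrow> (Suc i, i) \<notin> A)) \<and>
     (0, 1) \<in> A \<and> (1, 2) \<in> A \<and>
     (\<forall>i. 1 \<le> i \<and> i + 1 \<le> n - 3 \<longrightarrow>
          ((i, Suc i) \<in> A \<longleftrightarrow> (Suc (Suc i), Suc i) \<in> A)) \<and>
     ((n-3, n-2) \<in> A \<longleftrightarrow> (n-2, n-1) \<in> A)"

(* (S,A) is (isomorphic to) a member of F_n *)
definition in_F :: "nat \<Rightarrow> 'a set \<Rightarrow> ('a \<times> 'a) set \<Rightarrow> bool" where
  "in_F n S A \<longleftrightarrow> oriented_graph S A \<and>
     (\<exists>QA g. Q_path n QA \<and> graph_hom {0..<n} QA S A g \<and> g ` {0..<n} = S)"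

definition dicycle_iso :: "nat \<Rightarrow> 'a set \<Rightarrow> ('a \<times> 'a) set \<Rightarrow> bool" where
  "dicycle_iso k S A \<longleftrightarrow>
     (\<exists>h. bij_betw h {0..<k} S \<and> A = {(h i, h (Suc i mod k)) | i. i < k})"

end

theory Submission
  imports Defs
begin


definition Tor :: "nat \<Rightarrow> (nat \<times> nat) set" where
 "Tor m = {(a,b). a < m \<and> b < m \<and> ((a=0 \<and> b=1) \<or> (a = m-1 \<and> b = 0) \<or>
      (even a \<and> 2 \<le> a \<and> b = a+1) \<or> (odd b \<and> a = b+1))}"

lemma Tor_adj: "(a,b)\<in>Tor m \<Longrightarrow> b = Suc a \<or> a = Suc b \<or> (a = m-1 \<and> b = 0)"
  by (auto simp: Tor_def)

lemma Tor_out: "odd m \<Longrightarrow> (v,y)\<in>Tor m \<Longrightarrow> even v"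
  by (auto simp: Tor_def)

lemma Tor_in: "(x,v)\<in>Tor m \<Longrightarrow> v = 0 \<or> odd v"
  by (auto simp: Tor_def)

lemma Tor_L1: "Suc a < m \<Longrightarrow> m \<ge> 3 \<Longrightarrow> ((a, Suc a) \<in> Tor m \<longleftrightarrow> even a)"
  unfolding Tor_def by auto

lemma Tor_L2: "Suc a < m \<Longrightarrow> m \<ge> 3 \<Longrightarrow> ((Suc a, a) \<in> Tor m \<longleftrightarrow> odd a)"
  unfolding Tor_def by auto

lemma Tor_L3: "odd m \<Longrightarrow> m \<ge> 3 \<Longrightarrow> (m-1, 0) \<in> Tor m \<and> (0, m-1) \<notin> Tor m"
  unfolding Tor_def by auto

lemma Tor_orient:
  assumes "odd m" "m \<ge> 3" "(a,b)\<in>cycle_edges m"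
  shows "(a,b)\<in>Tor m \<longleftrightarrow> (b,a)\<notin>Tor m"
proof -
  have ab: "a < m" "b < m" "b = Suc a mod m \<or> a = Suc b mod m" using assms(3) unfolding cycle_edges_def by blast+
  consider "b = Suc a" "Suc a < m" | "a = m - 1" "b = 0" | "a = Suc b" "Suc b < m" | "b = m - 1" "a = 0"
  proof -
    from ab(3) show ?thesis
    proof
      assume h: "b = Suc a mod m"
      show ?thesis
      proof (cases "Suc a < m")
        case True then show ?thesis using h that(1) by simp
      next
        case False then have "Suc a = m" using ab(1) by simp
        then show ?thesis using h that(2) by simp
      qed
    next
      assume h: "a = Suc b mod m"
      show ?thesis
      proof (cases "Suc b < m")
        case True then show ?thesis using h that(3) by simp
      next
        case False then have "Suc b = m" using ab(2) by simp
        then show ?thesis using h that(4) by simp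
      qed
    qed
  qed
  then show ?thesis
  proof cases
    case 1 then show ?thesis using Tor_L1[of a m] Tor_L2[of a m] assms(2) by simp
  next
    case 2 then show ?thesis using Tor_L3[OF assms(1,2)] by simp
  next
    case 3 then show ?thesis using Tor_L1[of b m] Tor_L2[of b m] assms(2) by simp
  next
    case 4 then show ?thesis using Tor_L3[OF assms(1,2)] by simp
  qed
qed

definition rk :: "nat \<Rightarrow> nat" where "rk a = (if a = 0 then 1 else if odd a then 2 else 0)"

lemma Tor_rk: assumes "odd m" "m \<ge> 3" "(a,b)\<in>Tor m" shows "rk a < rk b"
proof -
  have "(a=0 \<and> b=1) \<or> (a = m-1 \<and> b = 0) \<or> (even a \<and> 2 \<le> a \<and> b = a+1) \<or> (odd b \<and> a = b+1)"
    using assms(3) unfolding Tor_def by blast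
  moreover have "even (m-1)" "m - 1 \<noteq> 0" using assms(1,2) by auto
  ultimately show ?thesis unfolding rk_def by auto
qed

lemma Q_pattern: "Q_path n QA \<Longrightarrow> 1 \<le> i \<Longrightarrow> i \<le> n-3 \<Longrightarrow> ((i,Suc i)\<in>QA \<longleftrightarrow> odd i)"
proof (induction i)
  case 0 then show ?case by simp
next
  case (Suc i)
  show ?case
  proof (cases "i = 0")
    case True
    have "(Suc 0, Suc (Suc 0)) \<in> QA" using Suc.prems by (simp add: Q_path_def numeral_2_eq_2)
    then show ?thesis using True by simp
  next
    case False
    have IH: "(i,Suc i)\<in>QA \<longleftrightarrow> odd i" using Suc False by simp
    have c4: "(i, Suc i) \<in> QA \<longleftrightarrow> (Suc (Suc i), Suc i) \<in> QA"
    proof -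
      have "1 \<le> i \<and> i + 1 \<le> n - 3" using Suc.prems False by arith
      then show ?thesis using Suc.prems(1) unfolding Q_path_def by blast
    qed
    have lt2: "Suc (Suc i) < n" using Suc.prems by arith
    have c2: "(Suc i, Suc (Suc i)) \<in> QA \<longleftrightarrow> (Suc (Suc i), Suc i) \<notin> QA"
      using Suc.prems(1) lt2 unfolding Q_path_def by blast
    show ?thesis using IH c4 c2 by simp
  qed
qed

lemma no_Q_Tor:
  assumes Q: "Q_path n QA" and n: "even n" "n \<ge> 4"
    and hom: "\<forall>(i,j)\<in>QA. (h i, h j) \<in> Tor (n-1)"
  shows False
proof -
  define m where "m = n - 1"
  have m: "odd m" "m \<ge> 3" using n by (auto simp: m_def)
  have hom': "\<And>i j. (i,j)\<in>QA \<Longrightarrow> (h i, h j) \<in> Tor m" using hom m_def by auto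
  have q01: "(0,1)\<in>QA" "(1,2)\<in>QA" using Q by (auto simp: Q_path_def)
  have h1: "h 1 = 0" using Tor_in[OF hom'[OF q01(1)]] Tor_out[OF m(1) hom'[OF q01(2)]] by auto
  have dir: "\<And>i. Suc i < n \<Longrightarrow> ((i,Suc i)\<in>QA \<longleftrightarrow> (Suc i, i) \<notin> QA)" using Q by (auto simp: Q_path_def)
  have inv: "1 \<le> i \<Longrightarrow> i \<le> n-2 \<Longrightarrow> h i + 1 \<le> i \<and> odd (h i + i)" for i
  proof (induction i)
    case 0 then show ?case by simp
  next
    case (Suc i)
    show ?case
    proof (cases "i = 0")
      case True then show ?thesis using h1 by simp
    next
      case False
      then have IH: "h i + 1 \<le> i \<and> odd (h i + i)" using Suc by simp
      have lt: "Suc i < n" using Suc.prems n by simp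
      have pat: "(i, Suc i) \<in> QA \<longleftrightarrow> odd i" using Q_pattern[OF Q] False Suc.prems by simp
      have d: "(i,Suc i)\<in>QA \<longleftrightarrow> (Suc i, i) \<notin> QA" using dir[OF lt] .
      have im: "h i + 3 \<le> m" using IH Suc.prems m_def by linarith
      show ?thesis
      proof (cases "(i,Suc i)\<in>QA")
        case True
        from Tor_adj[OF hom'[OF True]] IH im show ?thesis by presburger
      next
        case F: False
        then have SQ: "(Suc i, i)\<in>QA" using d by simp
        have nb: "\<not> (h (Suc i) = m - 1 \<and> h i = 0)"
        proof
          assume "h (Suc i) = m - 1 \<and> h i = 0"
          with IH pat F show False by simp
        qed
        from Tor_adj[OF hom'[OF SQ]] nb have "h i = Suc (h (Suc i)) \<or> h (Suc i) = Suc (h i)" by blast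
        with IH show ?thesis by presburger
      qed
    qed
  qed
  have a: "h (n-2) + 1 \<le> n - 2 \<and> odd (h (n-2) + (n-2))" using inv[of "n-2"] n by simp
  have p3: "(n-3, Suc (n-3)) \<in> QA" using Q_pattern[OF Q, of "n-3"] n by simp
  have "Suc (n-3) = n-2" using n by simp
  then have "(n-2, n-1) \<in> QA" using p3 Q by (simp add: Q_path_def)
  then have "even (h (n-2))" using Tor_out[OF m(1) hom'] by blast
  then show False using a n by simp
qed



fun Rr :: "('a \<times> 'a) set \<Rightarrow> 'a set \<Rightarrow> nat \<Rightarrow> 'a set" where
  "Rr D M 0 = M"
| "Rr D M (Suc k) = {v. \<exists>u\<in>Rr D M k. (if even k then (u,v)\<in>D else (v,u)\<in>D)}"

lemma Rr_walk: "v \<in> Rr D M k \<Longrightarrow> \<exists>w. w 0 \<in> M \<and> w k = v \<and>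
   (\<forall>i<k. if even i then (w i, w (Suc i)) \<in> D else (w (Suc i), w i) \<in> D)"
proof (induction k arbitrary: v)
  case 0 then show ?case by (intro exI[of _ "\<lambda>_. v"]) simp
next
  case (Suc k)
  then obtain u where u: "u \<in> Rr D M k" "if even k then (u,v)\<in>D else (v,u)\<in>D" by auto
  from Suc.IH[OF u(1)] obtain w where w: "w 0 \<in> M" "w k = u"
    "\<forall>i<k. if even i then (w i, w (Suc i)) \<in> D else (w (Suc i), w i) \<in> D" by blast
  show ?case
  proof (intro exI[of _ "w(Suc k := v)"] conjI allI impI)
    show "(w(Suc k := v)) 0 \<in> M" using w by simp
    show "(w(Suc k := v)) (Suc k) = v" by simp
    fix i assume "i < Suc k"
    then show "if even i then ((w(Suc k := v)) i, (w(Suc k := v)) (Suc i)) \<in> D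
      else ((w(Suc k := v)) (Suc i), (w(Suc k := v)) i) \<in> D"
      using w u by (cases "i = k") auto
  qed
qed

lemma Rr_odd_in: "odd k \<Longrightarrow> x \<in> Rr D M k \<Longrightarrow> \<exists>a. (a,x)\<in>D"
  by (cases k) auto

lemma Rr_even_out: "M \<subseteq> {x. \<exists>z. (x,z)\<in>D} \<Longrightarrow> even k \<Longrightarrow> x \<in> Rr D M k \<Longrightarrow> \<exists>z. (x,z)\<in>D"
  by (cases k) auto

lemma Rr_mono2: assumes "odd k" "x \<in> Rr D M k" shows "x \<in> Rr D M (Suc (Suc k))"
proof (cases k)
  case 0 then show ?thesis using assms by simp
next
  case (Suc k')
  have ek: "even k'" using assms(1) Suc by simp
  obtain u where u: "u \<in> Rr D M k'" "(u,x)\<in>D" using assms(2) Suc ek by auto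
  have "u \<in> Rr D M (Suc (Suc k'))" using u assms Suc by auto
  then show ?thesis using u Suc assms by auto
qed

lemma Rr_mono: "odd k \<Longrightarrow> x \<in> Rr D M k \<Longrightarrow> x \<in> Rr D M (k + 2*d)"
proof (induction d)
  case 0 then show ?case by simp
next
  case (Suc d)
  have "x \<in> Rr D M (Suc (Suc (k + 2*d)))" using Rr_mono2[of "k+2*d"] Suc by simp
  then show ?case by simp
qed

lemma dicycle_acyc:
  assumes "dicycle_iso k S A" "A \<subseteq> D" "k = 3 \<or> k = 4"
  shows "\<not> acyclic D"
proof -
  obtain h where A: "A = {(h i, h (Suc i mod k)) | i. i < k}" using assms(1) unfolding dicycle_iso_def by blast
  have st: "(h i, h (Suc i mod k)) \<in> D" if "i < k" for i
  proof -
    have "(h i, h (Suc i mod k)) \<in> A" unfolding A using that by blast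
    then show ?thesis using assms(2) by blast
  qed
  show ?thesis using assms(3)
  proof
    assume k: "k = 3"
    have a: "(h 0, h 1)\<in>D" using st[of 0] k by simp
    have "(h 1, h (Suc 1 mod 3))\<in>D" using st[of 1] k by simp
    moreover have "Suc 1 mod 3 = (2::nat)" by simp
    ultimately have b: "(h 1, h 2)\<in>D" by metis
    have "(h 2, h (Suc 2 mod 3))\<in>D" using st[of 2] k by simp
    moreover have "Suc 2 mod 3 = (0::nat)" by simp
    ultimately have c: "(h 2, h 0)\<in>D" by metis
    have "(h 0, h 0) \<in> D\<^sup>+"
      using trancl_into_trancl[OF trancl_into_trancl[OF r_into_trancl[OF a] b] c] .
    then show ?thesis unfolding acyclic_def by blast
  next
    assume k: "k = 4"
    have a: "(h 0, h 1)\<in>D" using st[of 0] k by simp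
    have "(h 1, h (Suc 1 mod 4))\<in>D" using st[of 1] k by simp
    moreover have "Suc 1 mod 4 = (2::nat)" by simp
    ultimately have b: "(h 1, h 2)\<in>D" by metis
    have "(h 2, h (Suc 2 mod 4))\<in>D" using st[of 2] k by simp
    moreover have "Suc 2 mod 4 = (3::nat)" by simp
    ultimately have c: "(h 2, h 3)\<in>D" by metis
    have "(h 3, h (Suc 3 mod 4))\<in>D" using st[of 3] k by simp
    moreover have "Suc 3 mod 4 = (0::nat)" by simp
    ultimately have d: "(h 3, h 0)\<in>D" by metis
    have "(h 0, h 0) \<in> D\<^sup>+"
      using trancl_into_trancl[OF trancl_into_trancl[OF trancl_into_trancl[OF r_into_trancl[OF a] b] c] d] .
    then show ?thesis unfolding acyclic_def by blast
  qed
qed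

lemma walk_Q:
  assumes n: "even n" "n \<ge> 4"
    and DV: "D \<subseteq> V \<times> V" and asym: "\<forall>u v. (u,v)\<in>D \<longrightarrow> (v,u)\<notin>D"
    and hyp: "\<forall>S. S \<subseteq> V \<longrightarrow> in_F n S (D \<inter> (S \<times> S)) \<longrightarrow>
                   dicycle_iso 3 S (D \<inter> (S \<times> S)) \<or> dicycle_iso 4 S (D \<inter> (S \<times> S))"
    and acyc: "acyclic D"
    and wa: "(a, w 0) \<in> D" and wz: "(w (n-3), z) \<in> D"
    and walk: "\<forall>i<n-3. if even i then (w i, w (Suc i))\<in>D else (w (Suc i), w i)\<in>D"
  shows False
proof -
  define QA where "QA = {(i,j). (j = Suc i \<and> j < n \<and> (i = 0 \<or> odd i \<or> i = n-2)) \<or>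
                                (i = Suc j \<and> 1 \<le> j \<and> j \<le> n-3 \<and> even j)}"
  define g where "g i = (if i = 0 then a else if i = n-1 then z else w (i-1))" for i
  define S where "S = g ` {0..<n}"
  have mem1: "(i, Suc i)\<in>QA \<longleftrightarrow> Suc i < n \<and> (i = 0 \<or> odd i \<or> i = n-2)" for i
    by (simp add: QA_def)
  have mem2: "(Suc i, i)\<in>QA \<longleftrightarrow> 1 \<le> i \<and> i \<le> n-3 \<and> even i" for i
    by (simp add: QA_def)
  have Qp: "Q_path n QA"
    unfolding Q_path_def
  proof (intro conjI allI impI)
    fix i j assume "(i,j)\<in>QA"
    then have "(j = Suc i \<and> j < n \<and> (i = 0 \<or> odd i \<or> i = n-2)) \<or>
                                (i = Suc j \<and> 1 \<le> j \<and> j \<le> n-3 \<and> even j)" by (simp add: QA_def)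
    then show "i < n" "j < n" "j = Suc i \<or> i = Suc j" by auto
  next
    fix i assume "Suc i < n"
    then show "(i, Suc i) \<in> QA \<longleftrightarrow> (Suc i, i) \<notin> QA" unfolding mem1 mem2 using n by presburger
  next
    show "(0, 1) \<in> QA" using mem1[of 0] n by simp
    show "(1, 2) \<in> QA" using mem1[of 1] n by (simp add: numeral_2_eq_2)
  next
    fix i assume "1 \<le> i \<and> i + 1 \<le> n - 3"
    then show "(i, Suc i) \<in> QA \<longleftrightarrow> (Suc (Suc i), Suc i) \<in> QA" unfolding mem1 mem2 using n by presburger
  next
    have e1: "n - 2 = Suc (n-3)" "n - 1 = Suc (n-2)" using n by auto
    have "(n-3, Suc (n-3)) \<in> QA" unfolding mem1 using n by presburger
    moreover have "(n-2, Suc (n-2)) \<in> QA" unfolding mem1 using n by simp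
    ultimately show "(n - 3, n - 2) \<in> QA \<longleftrightarrow> (n - 2, n - 1) \<in> QA" using e1 by metis
  qed
  have hom: "(g i, g j) \<in> D" if "(i,j)\<in>QA" for i j
  proof -
    have dj: "(j = Suc i \<and> j < n \<and> (i = 0 \<or> odd i \<or> i = n-2)) \<or>
                                (i = Suc j \<and> 1 \<le> j \<and> j \<le> n-3 \<and> even j)" using that by (simp add: QA_def)
    consider "j = Suc i" "i = 0" | "j = Suc i" "odd i" "j < n" | "j = Suc i" "i = n-2"
      | "i = Suc j" "1 \<le> j" "j \<le> n-3" "even j" using dj by blast
    then show ?thesis
    proof cases
      case 1
      have "Suc 0 \<noteq> n - Suc 0" using n by simp
      then show ?thesis using 1 wa n by (simp add: g_def)
    next
      case 2
      have "i \<le> n-3" using 2 n by presburger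
      have i1: "1 \<le> i" using 2(2) by (cases i) auto
      have e: "even (i-1)" "i - 1 < n-3" using 2 \<open>i \<le> n-3\<close> i1 n by auto
      have "if even (i-1) then (w (i-1), w (Suc (i-1))) \<in> D else (w (Suc (i-1)), w (i-1)) \<in> D"
        using walk e(2) by blast
      then have "(w (i-1), w (Suc (i-1))) \<in> D" using e(1) by simp
      then have "(w (i-1), w i) \<in> D" using 2 by simp
      moreover have "g i = w (i-1)" "g j = w i" unfolding g_def using 2 \<open>i \<le> n-3\<close> n by auto
      ultimately show ?thesis using 2 by simp
    next
      case 3
      have "Suc (n-3) = n-2" using n by simp
      moreover have "g i = w (n-3)" "g j = z" unfolding g_def using 3 n by auto
      ultimately show ?thesis using 3 wz by simp
    next
      case 4
      have e: "odd (j-1)" "j - 1 < n-3" using 4 by auto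
      have "if even (j-1) then (w (j-1), w (Suc (j-1))) \<in> D else (w (Suc (j-1)), w (j-1)) \<in> D"
        using walk e(2) by blast
      then have "(w (Suc (j-1)), w (j-1)) \<in> D" using e(1) by simp
      moreover have "g i = w j" "g j = w (j-1)" unfolding g_def using 4 n by auto
      ultimately show ?thesis using 4 by simp
    qed
  qed
  have QAb: "\<And>i j. (i,j)\<in>QA \<Longrightarrow> i < n \<and> j < n" using Qp by (auto simp: Q_path_def)
  have SV: "S \<subseteq> V"
  proof
    fix x assume "x \<in> S"
    then obtain i where i: "i < n" "x = g i" by (auto simp: S_def)
    show "x \<in> V"
    proof (cases "i = n-1")
      case True
      have "(n-2, n-1) \<in> QA" using n by (auto simp: QA_def)
      then have "(g (n-2), g (n-1)) \<in> D" by (rule hom)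
      then have "g (n-1) \<in> V" using DV by blast
      then show ?thesis using True i by simp
    next
      case False
      then have "Suc i < n" using i by simp
      then have "(i, Suc i)\<in>QA \<or> (Suc i, i)\<in>QA" using Qp by (auto simp: Q_path_def)
      then have "g i \<in> V"
      proof
        assume "(i, Suc i)\<in>QA"
        then have "(g i, g (Suc i)) \<in> D" by (rule hom)
        then show "g i \<in> V" using DV by blast
      next
        assume "(Suc i, i)\<in>QA"
        then have "(g (Suc i), g i) \<in> D" by (rule hom)
        then show "g i \<in> V" using DV by blast
      qed
      then show ?thesis using i by simp
    qed
  qed
  have inF: "in_F n S (D \<inter> (S \<times> S))"
    unfolding in_F_def
  proof (intro conjI exI)
    show "oriented_graph S (D \<inter> S \<times> S)" using asym unfolding oriented_graph_def irrefl_def by blast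
    show "Q_path n QA" by (rule Qp)
    show "graph_hom {0..<n} QA S (D \<inter> S \<times> S) g"
      unfolding graph_hom_def
    proof (intro conjI ballI)
      show "\<And>v. v \<in> {0..<n} \<Longrightarrow> g v \<in> S" unfolding S_def by blast
      fix p assume p: "p \<in> QA"
      obtain i j where ij: "p = (i,j)" by (cases p)
      have "(i,j) \<in> QA" using p ij by simp
      then have "(g i, g j) \<in> D" "i < n" "j < n" using hom QAb by blast+
      then have "(g i, g j) \<in> D \<inter> S \<times> S" unfolding S_def by auto
      then show "case p of (u, v) \<Rightarrow> (g u, g v) \<in> D \<inter> S \<times> S" using ij by simp
    qed
    show "g ` {0..<n} = S" by (simp add: S_def)
  qed
  from hyp SV inF have "dicycle_iso 3 S (D \<inter> (S \<times> S)) \<or> dicycle_iso 4 S (D \<inter> (S \<times> S))" by blast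
  then show False
  proof
    assume "dicycle_iso 3 S (D \<inter> (S \<times> S))"
    from dicycle_acyc[OF this] acyc show False by blast
  next
    assume "dicycle_iso 4 S (D \<inter> (S \<times> S))"
    from dicycle_acyc[OF this] acyc show False by blast
  qed
qed



theorem mainTheorem12:
  fixes V :: "'a set" and E :: "('a \<times> 'a) set" and n :: nat
  assumes "finite V" and "ugraph V E" and "even n" and "n \<ge> 4"
  shows "(\<exists>f. graph_hom V E {0..<n-1} (cycle_edges (n-1)) f) \<longleftrightarrow>
         (\<exists>D. orientation V E D \<and> acyclic D \<and>
              (\<forall>S. S \<subseteq> V \<longrightarrow> in_F n S (D \<inter> (S \<times> S)) \<longrightarrow>
                   dicycle_iso 3 S (D \<inter> (S \<times> S)) \<or> dicycle_iso 4 S (D \<inter> (S \<times> S))))"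
proof
  have EV: "E \<subseteq> V \<times> V" and symE: "sym E" and irrE: "irrefl E" using assms(2) by (auto simp: ugraph_def)
  have m: "odd (n-1)" "n - 1 \<ge> 3" using assms(3,4) by auto
  assume "\<exists>f. graph_hom V E {0..<n-1} (cycle_edges (n-1)) f"
  then obtain f where f: "graph_hom V E {0..<n-1} (cycle_edges (n-1)) f" by blast
  have fE: "\<And>u v. (u,v)\<in>E \<Longrightarrow> (f u, f v) \<in> cycle_edges (n-1)" using f by (auto simp: graph_hom_def)
  define D where "D = {(u,v). (u,v)\<in>E \<and> (f u, f v) \<in> Tor (n-1)}"
  have ori: "orientation V E D"
    unfolding orientation_def
  proof (intro conjI allI impI)
    show "D \<subseteq> E" by (auto simp: D_def)
    fix u v assume uv: "(u,v)\<in>E"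
    then have vu: "(v,u)\<in>E" using symE by (auto simp: sym_def)
    show "(u,v)\<in>D \<longleftrightarrow> (v,u)\<notin>D" using Tor_orient[OF m fE[OF uv]] uv vu by (auto simp: D_def)
  qed
  have rkD: "(x,y)\<in>D\<^sup>+ \<Longrightarrow> rk (f x) < rk (f y)" for x y
  proof (induction rule: trancl_induct)
    case (base y) then show ?case using Tor_rk[OF m] by (auto simp: D_def)
  next
    case (step y z) then show ?case using Tor_rk[OF m, of "f y" "f z"] by (auto simp: D_def)
  qed
  have acyc: "acyclic D" unfolding acyclic_def using rkD by blast
  have noF: "\<not> in_F n S (D \<inter> (S \<times> S))" for S
  proof
    assume "in_F n S (D \<inter> (S \<times> S))"
    then obtain QA g where Q: "Q_path n QA" and g: "graph_hom {0..<n} QA S (D \<inter> (S \<times> S)) g"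
      by (auto simp: in_F_def)
    have "\<forall>(i,j)\<in>QA. ((f \<circ> g) i, (f \<circ> g) j) \<in> Tor (n-1)" using g by (auto simp: graph_hom_def D_def)
    then show False using no_Q_Tor[OF Q assms(3,4)] by blast
  qed
  show "\<exists>D. orientation V E D \<and> acyclic D \<and>
              (\<forall>S. S \<subseteq> V \<longrightarrow> in_F n S (D \<inter> (S \<times> S)) \<longrightarrow>
                   dicycle_iso 3 S (D \<inter> (S \<times> S)) \<or> dicycle_iso 4 S (D \<inter> (S \<times> S)))"
    using ori acyc noF by blast
next
  have EV: "E \<subseteq> V \<times> V" and symE: "sym E" and irrE: "irrefl E" using assms(2) by (auto simp: ugraph_def)
  have n: "even n" "n \<ge> 4" using assms(3,4) by auto
  assume "\<exists>D. orientation V E D \<and> acyclic D \<and>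
              (\<forall>S. S \<subseteq> V \<longrightarrow> in_F n S (D \<inter> (S \<times> S)) \<longrightarrow>
                   dicycle_iso 3 S (D \<inter> (S \<times> S)) \<or> dicycle_iso 4 S (D \<inter> (S \<times> S)))"
  then obtain D where ori: "orientation V E D" and acyc: "acyclic D" and
    hyp: "\<forall>S. S \<subseteq> V \<longrightarrow> in_F n S (D \<inter> (S \<times> S)) \<longrightarrow>
                   dicycle_iso 3 S (D \<inter> (S \<times> S)) \<or> dicycle_iso 4 S (D \<inter> (S \<times> S))" by blast
  have DE: "D \<subseteq> E" using ori by (auto simp: orientation_def)
  have DV: "D \<subseteq> V \<times> V" using DE EV by blast
  have asym: "\<forall>u v. (u,v)\<in>D \<longrightarrow> (v,u)\<notin>D" using ori DE by (auto simp: orientation_def)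
  have EDD: "\<And>u v. (u,v)\<in>E \<Longrightarrow> (u,v)\<in>D \<or> (v,u)\<in>D" using ori by (auto simp: orientation_def)
  define M where "M = {v. (\<exists>a. (a,v)\<in>D) \<and> (\<exists>z. (v,z)\<in>D)}"
  have Mout: "M \<subseteq> {x. \<exists>z. (x,z)\<in>D}" by (auto simp: M_def)
  define L where "L v = (LEAST k. v \<in> Rr D M k)" for v
  define f where "f v = (if \<exists>k<n-2. v \<in> Rr D M k then L v else if (\<exists>z. (v,z)\<in>D) then n-2 else n-3)" for v
  have claimC: False if "y\<in>M" "y \<in> Rr D M j" "odd j" "j \<le> n-3" for y j
  proof -
    have "odd (n-3)" using n by simp
    then have "even (n-3-j)" using that(3,4) by simp
    then obtain d where d: "n-3-j = 2*d" by (elim evenE)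
    then have "n - 3 = j + 2 * d" using that(4) by simp
    then have "y \<in> Rr D M (n-3)" using Rr_mono[OF that(3,2), of d] by simp
    from Rr_walk[OF this] obtain w where w: "w 0 \<in> M" "w (n-3) = y"
      "\<forall>i<n-3. if even i then (w i, w (Suc i)) \<in> D else (w (Suc i), w i) \<in> D" by blast
    obtain a where a: "(a, w 0)\<in>D" using w(1) unfolding M_def by blast
    have wM: "w (n-3) \<in> M" using w(2) that(1) by simp
    then obtain z where z: "(w (n-3), z)\<in>D" unfolding M_def by blast
    show False using walk_Q[OF n DV asym hyp acyc a z w(3)] .
  qed
  have Lle: "\<And>v k. v \<in> Rr D M k \<Longrightarrow> L v \<le> k \<and> v \<in> Rr D M (L v)"
    unfolding L_def by (meson LeastI Least_le)
  have evM: "\<And>x k. x \<in> Rr D M k \<Longrightarrow> even k \<Longrightarrow> (\<exists>a. (a,x)\<in>D) \<Longrightarrow> x \<in> M"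
  proof -
    fix x k assume a: "x \<in> Rr D M k" "even k" "\<exists>a. (a,x)\<in>D"
    have "\<exists>z. (x,z)\<in>D" using Rr_even_out[OF Mout a(2,1)] .
    with a(3) show "x \<in> M" unfolding M_def by blast
  qed
  have odM: "\<And>x k. x \<in> Rr D M k \<Longrightarrow> odd k \<Longrightarrow> (\<exists>z. (x,z)\<in>D) \<Longrightarrow> x \<in> M"
  proof -
    fix x k assume a: "x \<in> Rr D M k" "odd k" "\<exists>z. (x,z)\<in>D"
    have "\<exists>a. (a,x)\<in>D" using Rr_odd_in[OF a(2,1)] .
    with a(3) show "x \<in> M" unfolding M_def by blast
  qed
  have L0M: "L x = 0" if "x \<in> M" for x
  proof -
    have "x \<in> Rr D M 0" using that by simp
    from Lle[OF this] show ?thesis by simp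
  qed
  have edge: "(f u, f v) \<in> cycle_edges (n-1)" if uv: "(u,v)\<in>D" for u v
  proof (cases "\<exists>k<n-2. u \<in> Rr D M k")
    case True
    then obtain k where k: "k < n-2" "u \<in> Rr D M k" by blast
    define k0 where "k0 = L u"
    have k0: "k0 \<le> k" "u \<in> Rr D M k0" using Lle[OF k(2)] k0_def by auto
    have fu: "f u = k0" using True by (simp add: f_def k0_def)
    have ek0: "even k0"
    proof (rule ccontr)
      assume "odd k0"
      then have "u \<in> M" using odM[OF k0(2)] uv by blast
      then show False using L0M k0_def \<open>odd k0\<close> by simp
    qed
    have k0b: "Suc k0 \<le> n - 3" using k0 k ek0 n by presburger
    have vS: "v \<in> Rr D M (Suc k0)" using k0(2) ek0 uv by auto
    define j0 where "j0 = L v"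
    have j0: "j0 \<le> Suc k0" "v \<in> Rr D M j0" using Lle[OF vS] j0_def by auto
    have fv: "f v = j0" using j0 k0b by (auto simp: f_def j0_def intro!: exI[of _ j0])
    have oj0: "odd j0"
    proof (rule ccontr)
      assume "\<not> odd j0"
      then have "v \<in> M" using evM[OF j0(2)] uv by auto
      then show False using claimC[OF _ vS] ek0 k0b by simp
    qed
    have "u \<in> Rr D M (Suc j0)" using j0(2) oj0 uv by auto
    then have "k0 \<le> Suc j0" using Lle k0_def by blast
    then have "j0 = Suc k0 \<or> k0 = Suc j0" using j0(1) ek0 oj0 by presburger
    then show ?thesis using fu fv k0b j0 n unfolding cycle_edges_def by auto
  next
    case False
    have fu: "f u = n-2" using False uv by (auto simp: f_def)
    show ?thesis
    proof (cases "\<exists>j<n-2. v \<in> Rr D M j")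
      case True
      then obtain j where j: "j < n-2" "v \<in> Rr D M j" by blast
      define j0 where "j0 = L v"
      have j0: "j0 \<le> j" "v \<in> Rr D M j0" using Lle[OF j(2)] j0_def by auto
      have fv: "f v = j0" using True by (simp add: f_def j0_def)
      show ?thesis
      proof (cases "even j0")
        case True
        then have "v \<in> M" using evM[OF j0(2)] uv by auto
        then have "j0 = 0" using L0M j0_def by simp
        moreover have "Suc (n-2) = n - 1" using n by simp
        ultimately show ?thesis using fu fv n unfolding cycle_edges_def by auto
      next
        case odd: False
        have "u \<in> Rr D M (Suc j0)" using j0(2) odd uv by auto
        then have "\<not> Suc j0 < n - 2" using False by blast
        then have "j0 = n-3" using j0 j by simp
        then show ?thesis using fu fv n unfolding cycle_edges_def by auto
      qed
    next
      case F2: False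
      have "\<not> (\<exists>z. (v,z)\<in>D)"
      proof
        assume "\<exists>z. (v,z)\<in>D"
        then have "v \<in> M" using uv by (auto simp: M_def)
        then have "v \<in> Rr D M 0" by simp
        moreover have "0 < n - 2" using n by simp
        ultimately show False using F2 by blast
      qed
      then have fv: "f v = n-3" using F2 by (auto simp: f_def)
      then show ?thesis using fu fv n unfolding cycle_edges_def by auto
    qed
  qed
  have frange: "f v \<in> {0..<n-1}" for v
  proof (cases "\<exists>k<n-2. v \<in> Rr D M k")
    case True
    then obtain k where "k < n-2" "v \<in> Rr D M k" by blast
    then show ?thesis using Lle True by (fastforce simp: f_def)
  next
    case False then show ?thesis using n by (auto simp: f_def)
  qed
  have "graph_hom V E {0..<n-1} (cycle_edges (n-1)) f"
    unfolding graph_hom_def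
  proof (intro conjI ballI)
    show "\<And>v. v \<in> V \<Longrightarrow> f v \<in> {0..<n-1}" using frange by blast
    fix p assume "p \<in> E"
    then obtain u v where p: "p = (u,v)" "(u,v)\<in>E" by (cases p) auto
    from EDD[OF p(2)] show "case p of (u, v) \<Rightarrow> (f u, f v) \<in> cycle_edges (n - 1)"
      using edge p unfolding cycle_edges_def by auto
  qed
  then show "\<exists>f. graph_hom V E {0..<n-1} (cycle_edges (n-1)) f" by blast
qed

end
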